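(* Fix $\phi\in\mathbb{R}^d$ with $\mu=\|\phi\|^2>0$, a one-hot label ${\bm y}\in\{0,1\}^V$, and let $f({\bm z},{\bm y})=-\sum_k y_k\log p_k({\bm z})$ with ${\bm p}({\bm z})=\mathrm{softmax}({\bm z})$. Let $\kappa\ge0$, $|\eta|\in(0,1]$, $|\rho|\le\kappa\sqrt{|\eta|}$. Given ${\bm W}^t\in\mathbb{R}^{V\times d}$, let ${\bm z}^t={\bm W}^t\phi$, ${\bm p}^t={\bm p}({\bm z}^t)$, ${\bm g}^t={\bm p}^t-{\bm y}$, ${\bm H}^t_{{\bm z}}=\mathrm{diag}({\bm p}^t)-{\bm p}^t({\bm p}^t)^\top$, and let ${\bm W}^{t+1}$ be obtained by one SAM step: with $F({\bm W})=f({\bm W}\phi,{\bm y})$, $\widetilde{{\bm W}}^t={\bm W}^t+\rho\nabla F({\bm W}^t)/\|\nabla F({\bm W}^t)\|$ (perturbation $0$ if ${\bm g}^t=0$) and ${\bm W}^{t+1}={\bm W}^t-\eta\nabla F(\widetilde{{\bm W}}^t)$; let ${\bm g}^{t+1}={\bm p}({\bm W}^{t+1}\phi)-{\bm y}$, and $\tilde\rho^{\,t}=\rho\sqrt\mu/\|{\bm g}^t\|$ (with $\tilde\rho^{\,t}=0$ if ${\bm g}^t=0$). Let ${\bm H}^t_{{\bm z}}=\sum_{k=1}^{V-1}\lambda_k^t{\bm v}_k^t({\bm v}_k^t)^\top$ be a spectral decomposition with $\lambda_k^t>0$ and $({\bm v}_k^t)^\top{\bm v}_\ell^t=\delta_{k\ell}$,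 and define $e_k^t=({\bm v}_k^t)^\top{\bm g}^t$ for $k=1,\dots,V-1$. Then there exists a constant $C>0$ (depending only on $V,\mu,\kappa$) such that for all $k=1,\dots,V-1$, $$({\bm v}_k^t)^\top{\bm g}^{t+1}=\Big(1-\eta\mu\big[\lambda_k^t+\tilde\rho^{\,t}(\lambda_k^t)^2\big]\Big)e_k^t+r_k^t,\qquad |r_k^t|\le C\eta^2.$$
   Context: $\|\cdot\|$ is the Euclidean norm on vectors and Frobenius norm on matrices. The gradient in ${\bm W}$ is $\nabla F({\bm W})=(\nabla_{\bm z} f({\bm W}\phi,{\bm y}))\phi^\top$. *)

theory Defs
  imports "HOL-Analysis.Analysis"
begin

(* Vectors in R^V: real^'v (V = CARD('v)).
   Input dimension d is an explicit natural number (so that the constant C can be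
   chosen independently of d): phi :: nat => real, entries j < d.
   A matrix W in R^{V x d} is given by its columns: W :: nat => real^'v, column j for j < d. *)

definition softmax :: "real^'v \<Rightarrow> real^'v" where
  "softmax z = (\<chi> k. exp (z $ k) / (\<Sum>j\<in>UNIV. exp (z $ j)))"

definition one_hot :: "real^'v \<Rightarrow> bool" where
  "one_hot y \<longleftrightarrow> (\<exists>c. y = (\<chi> k. if k = c then 1 else 0))"

definition ce_loss :: "real^'v \<Rightarrow> real^'v \<Rightarrow> real" where
  "ce_loss z y = - (\<Sum>k\<in>UNIV. y $ k * ln (softmax z $ k))"

definition sqnorm_d :: "nat \<Rightarrow> (nat \<Rightarrow> real) \<Rightarrow> real" where
  "sqnorm_d d phi = (\<Sum>j<d. (phi j)\<^sup>2)"

definition matvec :: "nat \<Rightarrow> (nat \<Rightarrow> real^'v) \<Rightarrow> (nat \<Rightarrow> real) \<Rightarrow> real^'v" where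
  "matvec d W phi = (\<Sum>j<d. phi j *\<^sub>R W j)"

definition frob :: "nat \<Rightarrow> (nat \<Rightarrow> real^'v) \<Rightarrow> real" where
  "frob d W = sqrt (\<Sum>j<d. (norm (W j))\<^sup>2)"

(* gradient of F(W) = f(W phi, y):  (p(W phi) - y) phi^T, column j = phi_j (p - y) *)
definition gradF :: "nat \<Rightarrow> (nat \<Rightarrow> real) \<Rightarrow> real^'v \<Rightarrow> (nat \<Rightarrow> real^'v) \<Rightarrow> (nat \<Rightarrow> real^'v)" where
  "gradF d phi y W = (\<lambda>j. phi j *\<^sub>R (softmax (matvec d W phi) - y))"

definition sam_step :: "nat \<Rightarrow> (nat \<Rightarrow> real) \<Rightarrow> real^'v \<Rightarrow> real \<Rightarrow> real \<Rightarrow>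
    (nat \<Rightarrow> real^'v) \<Rightarrow> (nat \<Rightarrow> real^'v)" where
  "sam_step d phi y \<eta> \<rho> W =
    (let g = softmax (matvec d W phi) - y;
         G = gradF d phi y W;
         Wt = (if g = 0 then W else (\<lambda>j. W j + (\<rho> / frob d G) *\<^sub>R G j))
     in (\<lambda>j. W j - \<eta> *\<^sub>R gradF d phi y Wt j))"

definition hess_z :: "real^'v \<Rightarrow> real^'v^'v" where
  "hess_z p = (\<chi> i j. (if i = j then p $ i else 0) - p $ i * p $ j)"

definition outer :: "real^'v \<Rightarrow> real^'v \<Rightarrow> real^'v^'v" where
  "outer u w = (\<chi> i j. u $ i * w $ j)"

end

theory Submission
  imports Defs
begin


lemma softmax_alt: "softmax z $ i = exp (z $ i) / (\<Sum>j\<in>UNIV. exp (z $ j))"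
  by (simp add: softmax_def)

lemma softmax_pos: "softmax z $ i > 0"
  by (simp add: softmax_def sum_pos)

lemma softmax_sum: "(\<Sum>i\<in>UNIV. softmax z $ i) = 1"
proof -
  have "(\<Sum>j\<in>UNIV. exp (z $ j)) > 0" by (simp add: sum_pos)
  then show ?thesis by (simp add: softmax_def sum_divide_distrib[symmetric])
qed

lemma softmax_le1: "softmax z $ i \<le> 1"
proof -
  have "softmax z $ i \<le> (\<Sum>i\<in>UNIV. softmax z $ i)"
    by (rule member_le_sum) (auto simp: less_imp_le softmax_pos)
  then show ?thesis by (simp add: softmax_sum)
qed

lemma aux_alg: "S > 0 \<Longrightarrow> Q = E / S \<Longrightarrow> q = e / S \<Longrightarrow> ((e * a) * S - e * E) / (S * S) = q * (a - Q)" for S Q E q e a :: real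
  by (simp add: field_simps)

lemma sm_deriv:
  "((\<lambda>t. softmax (z + t *\<^sub>R h) $ i) has_real_derivative
     (softmax (z + t *\<^sub>R h) $ i * (h $ i - (\<Sum>j\<in>UNIV. softmax (z + t *\<^sub>R h) $ j * h $ j)))) (at t)"
proof -
  define S where "S = (\<lambda>t. \<Sum>j\<in>UNIV. exp (z $ j + t * h $ j))"
  have Spos: "S t > 0" by (simp add: S_def sum_pos)
  have f: "(\<lambda>t. softmax (z + t *\<^sub>R h) $ i) = (\<lambda>t. exp (z $ i + t * h $ i) / S t)"
    by (simp add: softmax_def S_def)
  have dS: "(S has_real_derivative (\<Sum>j\<in>UNIV. exp (z $ j + t * h $ j) * h $ j)) (at t)"
    unfolding S_def
    by (auto intro!: derivative_eq_intros)
  have "((\<lambda>t. exp (z $ i + t * h $ i) / S t) has_real_derivative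
     ((exp (z $ i + t * h $ i) * h $ i) * S t - exp (z $ i + t * h $ i) * (\<Sum>j\<in>UNIV. exp (z $ j + t * h $ j) * h $ j)) / (S t * S t)) (at t)"
    by (rule DERIV_divide[OF _ dS]) (auto intro!: derivative_eq_intros simp: Spos less_imp_neq[symmetric])
  moreover have "((exp (z $ i + t * h $ i) * h $ i) * S t - exp (z $ i + t * h $ i) * (\<Sum>j\<in>UNIV. exp (z $ j + t * h $ j) * h $ j)) / (S t * S t)
     = softmax (z + t *\<^sub>R h) $ i * (h $ i - (\<Sum>j\<in>UNIV. softmax (z + t *\<^sub>R h) $ j * h $ j))"
  proof -
    have "(\<Sum>j\<in>UNIV. softmax (z + t *\<^sub>R h) $ j * h $ j) = (\<Sum>j\<in>UNIV. exp (z $ j + t * h $ j) * h $ j) / S t"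
      by (simp add: softmax_def S_def sum_divide_distrib)
    moreover have "softmax (z + t *\<^sub>R h) $ i = exp (z $ i + t * h $ i) / S t"
      by (simp add: softmax_def S_def)
    ultimately show ?thesis using Spos
      by (intro aux_alg)
  qed
  ultimately show ?thesis by (simp add: f)
qed

lemma sm_deriv':
  "D = softmax (z + t *\<^sub>R h) $ i * (h $ i - (\<Sum>j\<in>UNIV. softmax (z + t *\<^sub>R h) $ j * h $ j)) \<Longrightarrow>
   ((\<lambda>t. softmax (z + t *\<^sub>R h) $ i) has_real_derivative D) (at t within T)"
  using sm_deriv has_field_derivative_at_within by blast

lemma sm_deriv2:
  "((\<lambda>t. softmax (z + t *\<^sub>R h) $ i * (h $ i - (\<Sum>j\<in>UNIV. softmax (z + t *\<^sub>R h) $ j * h $ j)))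
    has_real_derivative
    (softmax (z + t *\<^sub>R h) $ i * (h $ i - (\<Sum>j\<in>UNIV. softmax (z + t *\<^sub>R h) $ j * h $ j)) *
       (h $ i - (\<Sum>j\<in>UNIV. softmax (z + t *\<^sub>R h) $ j * h $ j))
     - softmax (z + t *\<^sub>R h) $ i * (\<Sum>j\<in>UNIV. softmax (z + t *\<^sub>R h) $ j * (h $ j - (\<Sum>l\<in>UNIV. softmax (z + t *\<^sub>R h) $ l * h $ l)) * h $ j))) (at t)"
  by (rule derivative_eq_intros sm_deriv' refl | simp)+

lemma taylor2:
  fixes f f1 f2 :: "real \<Rightarrow> real"
  assumes d1: "\<And>t. (f has_real_derivative f1 t) (at t)"
    and d2: "\<And>t. (f1 has_real_derivative f2 t) (at t)"
    and b: "\<And>t. \<bar>f2 t\<bar> \<le> B"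
  shows "\<bar>f 1 - f 0 - f1 0\<bar> \<le> B"
proof -
  have "\<And>t. ((\<lambda>t. f t - t * f1 0) has_real_derivative (f1 t - f1 0)) (at t)"
    by (rule derivative_eq_intros d1 refl | simp)+
  from MVT2[of 0 1 "\<lambda>t. f t - t * f1 0", OF _ this]
  obtain c where c: "0 < c" "c < 1" "f 1 - 1 * f1 0 - (f 0 - 0 * f1 0) = (1 - 0) * (f1 c - f1 0)" by auto
  from MVT2[of 0 c f1 f2, OF c(1) d2]
  obtain c' where c': "f1 c - f1 0 = (c - 0) * f2 c'" by auto
  have "\<bar>f 1 - f 0 - f1 0\<bar> = c * \<bar>f2 c'\<bar>" using c c' by (simp add: abs_mult algebra_simps)
  also have "\<dots> \<le> 1 * B" using c b[of c'] by (intro mult_mono) auto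
  finally show ?thesis by simp
qed

lemma d2_bound:
  fixes h w :: "real^'v"
  defines "q \<equiv> softmax w"
  shows "\<bar>q $ i * (h $ i - (\<Sum>j\<in>UNIV. q $ j * h $ j)) * (h $ i - (\<Sum>j\<in>UNIV. q $ j * h $ j))
     - q $ i * (\<Sum>j\<in>UNIV. q $ j * (h $ j - (\<Sum>l\<in>UNIV. q $ l * h $ l)) * h $ j)\<bar> \<le> 6 * (norm h)\<^sup>2"
proof -
  define N where "N = norm h"
  define m where "m = (\<Sum>j\<in>UNIV. q $ j * h $ j)"
  have hj: "\<And>j. \<bar>h $ j\<bar> \<le> N" unfolding N_def by (rule component_le_norm_cart)
  have q0: "\<And>j. 0 \<le> q $ j" and q1: "\<And>j. q $ j \<le> 1" and qs: "(\<Sum>j\<in>UNIV. q $ j) = 1"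
    unfolding q_def using softmax_pos less_imp_le softmax_le1 softmax_sum by auto
  have N0: "N \<ge> 0" unfolding N_def by simp
  have "\<bar>m\<bar> \<le> (\<Sum>j\<in>UNIV. \<bar>q $ j * h $ j\<bar>)" unfolding m_def by (rule sum_abs)
  also have "\<dots> \<le> (\<Sum>j\<in>UNIV. q $ j * N)"
    by (intro sum_mono) (simp add: abs_mult q0 hj mult_left_mono)
  also have "\<dots> = N" by (simp add: sum_distrib_right[symmetric] qs)
  finally have mN: "\<bar>m\<bar> \<le> N" .
  have dN: "\<bar>h $ j - m\<bar> \<le> 2 * N" for j using hj[of j] mN by linarith
  have "\<bar>\<Sum>j\<in>UNIV. q $ j * (h $ j - m) * h $ j\<bar> \<le> (\<Sum>j\<in>UNIV. \<bar>q $ j * (h $ j - m) * h $ j\<bar>)"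
    by (rule sum_abs)
  also have "\<dots> \<le> (\<Sum>j\<in>UNIV. q $ j * (2 * N * N))"
  proof (intro sum_mono)
    fix j
    have "\<bar>(h $ j - m) * h $ j\<bar> \<le> 2 * N * N"
      unfolding abs_mult by (intro mult_mono dN hj) (use N0 in auto)
    then show "\<bar>q $ j * (h $ j - m) * h $ j\<bar> \<le> q $ j * (2 * N * N)"
      by (simp add: abs_mult q0 mult_left_mono mult.assoc)
  qed
  also have "\<dots> = 2 * N * N" by (simp add: sum_distrib_right[symmetric] qs)
  finally have S: "\<bar>\<Sum>j\<in>UNIV. q $ j * (h $ j - m) * h $ j\<bar> \<le> 2 * N * N" .
  have T1: "\<bar>q $ i * (h $ i - m) * (h $ i - m)\<bar> \<le> 1 * (2 * N) * (2 * N)"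
    unfolding abs_mult by (intro mult_mono dN) (use q0 q1 N0 in auto)
  have T2: "\<bar>q $ i * (\<Sum>j\<in>UNIV. q $ j * (h $ j - m) * h $ j)\<bar> \<le> 1 * (2 * N * N)"
    unfolding abs_mult by (intro mult_mono S) (use q0 q1 N0 in auto)
  have "\<bar>q $ i * (h $ i - m) * (h $ i - m) - q $ i * (\<Sum>j\<in>UNIV. q $ j * (h $ j - m) * h $ j)\<bar> \<le> 6 * N\<^sup>2"
    using T1 T2 by (simp add: power2_eq_square)
  then show ?thesis unfolding m_def N_def .
qed

lemma hess_mv: "(hess_z p *v u) $ i = p $ i * u $ i - p $ i * (\<Sum>j\<in>UNIV. p $ j * u $ j)"
proof -
  have "(hess_z p *v u) $ i = (\<Sum>j\<in>UNIV. (if i = j then p $ i * u $ j else 0) - p $ i * (p $ j * u $ j))"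
    unfolding hess_z_def matrix_vector_mult_def vec_lambda_beta by (intro sum.cong) (auto simp: algebra_simps)
  also have "\<dots> = p $ i * u $ i - p $ i * (\<Sum>j\<in>UNIV. p $ j * u $ j)"
    by (simp add: sum_subtractf sum_distrib_left)
  finally show ?thesis .
qed

lemma taylor_sm:
  "\<bar>softmax (z + h) $ i - softmax z $ i - (hess_z (softmax z) *v h) $ i\<bar> \<le> 6 * (norm h)\<^sup>2"
proof -
  have "\<bar>softmax (z + 1 *\<^sub>R h) $ i - softmax (z + 0 *\<^sub>R h) $ i - 
     softmax (z + 0 *\<^sub>R h) $ i * (h $ i - (\<Sum>j\<in>UNIV. softmax (z + 0 *\<^sub>R h) $ j * h $ j))\<bar> \<le> 6 * (norm h)\<^sup>2"
    by (rule taylor2[where f="\<lambda>t. softmax (z + t *\<^sub>R h) $ i", OF sm_deriv sm_deriv2 d2_bound])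
  then show ?thesis by (simp add: hess_mv algebra_simps)
qed

lemma taylor_sm_vec:
  "norm (softmax (z + h) - softmax z - hess_z (softmax z) *v h) \<le> 6 * real CARD('v) * (norm h)\<^sup>2"
    for z :: "real^'v"
proof -
  have "norm (softmax (z + h) - softmax z - hess_z (softmax z) *v h) \<le>
     (\<Sum>i\<in>UNIV. \<bar>(softmax (z + h) - softmax z - hess_z (softmax z) *v h) $ i\<bar>)"
    by (rule norm_le_l1_cart)
  also have "\<dots> \<le> (\<Sum>i\<in>(UNIV::'v set). 6 * (norm h)\<^sup>2)"
    by (intro sum_mono) (simp add: taylor_sm)
  also have "\<dots> = 6 * real CARD('v) * (norm h)\<^sup>2" by simp
  finally show ?thesis .
qed



lemma matvec_pert:
  "matvec d (\<lambda>j. W j + c *\<^sub>R (phi j *\<^sub>R g)) phi = matvec d W phi + (c * sqnorm_d d phi) *\<^sub>R g"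
  by (simp add: matvec_def sqnorm_d_def scaleR_add_right sum.distrib scaleR_sum_left power2_eq_square
      sum_distrib_left algebra_simps)

lemma matvec_step:
  "matvec d (\<lambda>j. W j - c *\<^sub>R (phi j *\<^sub>R g)) phi = matvec d W phi - (c * sqnorm_d d phi) *\<^sub>R g"
  by (simp add: matvec_def sqnorm_d_def scaleR_diff_right sum_subtractf scaleR_sum_left power2_eq_square
      sum_distrib_left algebra_simps)

lemma frob_grad: "frob d (\<lambda>j. phi j *\<^sub>R g) = sqrt (sqnorm_d d phi) * norm g"
proof -
  have "(\<Sum>j<d. (norm (phi j *\<^sub>R g))\<^sup>2) = sqnorm_d d phi * (norm g)\<^sup>2"
    by (simp add: sqnorm_d_def sum_distrib_right power_mult_distrib)
  then show ?thesis by (simp add: frob_def real_sqrt_mult)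
qed

lemma mv_sum: "finite S \<Longrightarrow> (\<Sum>l\<in>S. A l) *v x = (\<Sum>l\<in>S. A l *v x)"
  by (induction S rule: finite_induct) (auto simp: matrix_vector_mult_add_rdistrib)

lemma mv_scale: "(c *\<^sub>R A) *v x = c *\<^sub>R (A *v x)" for A :: "real^'n^'m"
  by (simp add: vec_eq_iff matrix_vector_mult_def sum_distrib_left mult.assoc)

lemma outer_mv: "outer u w *v x = (w \<bullet> x) *\<^sub>R u" for u w x :: "real^'n"
  by (simp add: vec_eq_iff matrix_vector_mult_def outer_def inner_vec_def sum_distrib_left sum_distrib_right algebra_simps)

lemma spec:
  assumes H: "A = (\<Sum>l\<in>S. lam l *\<^sub>R outer (v l) (v l))" and fin: "finite S"
    and orth: "\<forall>k\<in>S. \<forall>l\<in>S. v k \<bullet> v l = (if k = l then 1 else 0)" and k: "k \<in> S"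
  shows "v k \<bullet> (A *v x) = lam k * (v k \<bullet> x)"
proof -
  have "v k \<bullet> (A *v x) = (\<Sum>l\<in>S. lam l * (v l \<bullet> x) * (v k \<bullet> v l))"
    by (simp add: H mv_sum[OF fin] mv_scale outer_mv inner_sum_right mult.assoc)
  also have "\<dots> = (\<Sum>l\<in>S. if l = k then lam k * (v k \<bullet> x) else 0)"
    using orth k by (intro sum.cong) auto
  also have "\<dots> = lam k * (v k \<bullet> x)" using fin k by simp
  finally show ?thesis .
qed

lemma quad_le: "u \<bullet> (hess_z (softmax z) *v u) \<le> u \<bullet> u"
proof -
  define p where "p = softmax z"
  define m where "m = (\<Sum>j\<in>UNIV. p $ j * u $ j)"
  have "u \<bullet> (hess_z p *v u) = (\<Sum>i\<in>UNIV. p $ i * (u $ i)\<^sup>2) - m * m"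
    by (simp add: inner_vec_def hess_mv m_def[symmetric] sum_subtractf sum_distrib_left sum_distrib_right
        power2_eq_square algebra_simps) (metis m_def sum_distrib_left)
  also have "\<dots> \<le> (\<Sum>i\<in>UNIV. p $ i * (u $ i)\<^sup>2)" by simp
  also have "\<dots> \<le> (\<Sum>i\<in>UNIV. (u $ i)\<^sup>2)"
    by (intro sum_mono) (simp add: p_def mult_left_le_one_le softmax_le1 less_imp_le softmax_pos)
  also have "\<dots> = u \<bullet> u" by (simp add: inner_vec_def power2_eq_square)
  finally show ?thesis by (simp add: p_def)
qed

lemma sq_aux: "0 \<le> s \<Longrightarrow> s \<le> 1 \<Longrightarrow> (s - 1)*(s-1) \<le> s + (1::real)"
proof -
  assume a: "0 \<le> s" "s \<le> 1"
  have "(1-s)*(1-s) \<le> (1-s)*1" by (rule mult_left_mono) (use a in auto)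
  moreover have "(s - 1)*(s-1) = (1-s)*(1-s)" by (simp add: algebra_simps)
  ultimately show ?thesis using a by (smt (verit))
qed

lemma sq_aux0: "0 \<le> s \<Longrightarrow> s \<le> 1 \<Longrightarrow> s * s \<le> s + (0::real)"
  by (simp add: mult_left_le_one_le)

lemma onehot_bound: "one_hot y \<Longrightarrow> (norm (softmax w - y))\<^sup>2 \<le> 2"
proof -
  assume "one_hot y"
  then obtain c where y: "y = (\<chi> k. if k = c then 1 else 0)" by (auto simp: one_hot_def)
  have "(norm (softmax w - y))\<^sup>2 = (\<Sum>i\<in>UNIV. (softmax w $ i - y $ i)\<^sup>2)"
    by (simp add: norm_vec_def L2_set_def sum_nonneg)
  also have "\<dots> \<le> (\<Sum>i\<in>UNIV. softmax w $ i + y $ i)"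
  proof (intro sum_mono)
    fix i
    have a: "0 < softmax w $ i" "softmax w $ i \<le> 1" by (rule softmax_pos, rule softmax_le1)
    have "y $ i = 0 \<or> y $ i = 1" by (simp add: y)
    then show "(softmax w $ i - y $ i)\<^sup>2 \<le> softmax w $ i + y $ i"
      using a sq_aux[of "softmax w $ i"] sq_aux0[of "softmax w $ i"] by (auto simp: power2_eq_square)
  qed
  also have "\<dots> = 2" by (simp add: sum.distrib softmax_sum y)
  finally show ?thesis .
qed



lemma inner_le_norm: "v \<bullet> v = 1 \<Longrightarrow> \<bar>v \<bullet> x\<bar> \<le> norm x" for v x :: "real^'n"
proof -
  assume "v \<bullet> v = 1"
  then have "norm v = 1" by (simp add: norm_eq_sqrt_inner)
  then show ?thesis using Cauchy_Schwarz_ineq2[of v x] by simp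
qed

lemma main_step:
  fixes W :: "nat \<Rightarrow> real^'v" and y :: "real^'v" and v :: "nat \<Rightarrow> real^'v"
  assumes mu: "sqnorm_d d phi = \<mu>" "\<mu> > 0" and kap: "\<kappa> \<ge> 0" and oh: "one_hot y"
    and eta: "\<bar>\<eta>\<bar> \<le> 1" and rho: "\<bar>\<rho>\<bar> \<le> \<kappa> * sqrt \<bar>\<eta>\<bar>"
    and H: "hess_z (softmax (matvec d W phi)) = (\<Sum>l\<in>S. lam l *\<^sub>R outer (v l) (v l))"
    and fin: "finite S"
    and orth: "\<forall>k\<in>S. \<forall>l\<in>S. v k \<bullet> v l = (if k = l then 1 else 0)"
    and k: "k \<in> S" and lk: "lam k > 0"
    and g_def: "g = softmax (matvec d W phi) - y"
    and g1_def: "g1 = softmax (matvec d (sam_step d phi y \<eta> \<rho> W) phi) - y"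
    and rt: "\<rho>t = (if g = 0 then 0 else \<rho> * sqrt \<mu> / norm g)"
  shows "\<bar>v k \<bullet> g1 - (1 - \<eta> * \<mu> * (lam k + \<rho>t * (lam k)\<^sup>2)) * (v k \<bullet> g)\<bar>
     \<le> (6 * real CARD('v) * \<kappa>\<^sup>2 * \<mu>\<^sup>2 + 2 * (6 * real CARD('v)) * \<mu>\<^sup>2) * \<eta>\<^sup>2"
proof -
  define K where "K = 6 * real CARD('v)"
  define z where "z = matvec d W phi"
  define p where "p = softmax z"
  define Hm where "Hm = hess_z p"
  define zt where "zt = z + \<rho>t *\<^sub>R g"
  define gt where "gt = softmax zt - y"
  have K0: "K \<ge> 0" by (simp add: K_def)
  have gW: "gradF d phi y W = (\<lambda>j. phi j *\<^sub>R g)" by (simp add: gradF_def g_def)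
  define Wt where "Wt = (if g = 0 then W else (\<lambda>j. W j + (\<rho> / frob d (gradF d phi y W)) *\<^sub>R gradF d phi y W j))"
  have wt: "matvec d Wt phi = zt"
  proof (cases "g = 0")
    case True then show ?thesis by (simp add: Wt_def zt_def z_def)
  next
    case False
    have "Wt = (\<lambda>j. W j + (\<rho> / (sqrt \<mu> * norm g)) *\<^sub>R (phi j *\<^sub>R g))"
      using False by (simp add: Wt_def gW frob_grad mu)
    then have "matvec d Wt phi = z + (\<rho> / (sqrt \<mu> * norm g) * \<mu>) *\<^sub>R g"
      by (simp only: matvec_pert mu z_def)
    also have "\<rho> / (sqrt \<mu> * norm g) * \<mu> = \<rho>t"
    proof -
      have "\<mu> = sqrt \<mu> * sqrt \<mu>" using mu by simp
      then show ?thesis using False mu by (simp add: rt field_simps)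
    qed
    finally show ?thesis by (simp add: zt_def)
  qed
  have step: "sam_step d phi y \<eta> \<rho> W = (\<lambda>j. W j - \<eta> *\<^sub>R (phi j *\<^sub>R gt))"
    unfolding sam_step_def Let_def g_def[symmetric] Wt_def[symmetric]
    by (simp add: gradF_def wt gt_def)
  define hh where "hh = (- (\<eta> * \<mu>)) *\<^sub>R gt"
  have g1: "g1 = softmax (z + hh) - y"
    unfolding g1_def step matvec_step mu z_def hh_def by simp
  define R1 where "R1 = softmax (z + hh) - p - Hm *v hh"
  define R2 where "R2 = softmax (z + \<rho>t *\<^sub>R g) - p - Hm *v (\<rho>t *\<^sub>R g)"
  have R1b: "norm R1 \<le> K * (norm hh)\<^sup>2" unfolding R1_def K_def p_def Hm_def by (rule taylor_sm_vec)
  have R2b: "norm R2 \<le> K * (norm (\<rho>t *\<^sub>R g))\<^sup>2" unfolding R2_def K_def p_def Hm_def by (rule taylor_sm_vec)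
  have vv: "v k \<bullet> v k = 1" using orth k by simp
  have specx: "v k \<bullet> (Hm *v x) = lam k * (v k \<bullet> x)" for x
    using spec[OF H[folded z_def p_def, folded Hm_def] fin orth k] .
  have lk1: "lam k \<le> 1"
    using specx[of "v k"] quad_le[of "v k" z] vv by (simp add: Hm_def p_def)
  have g1e: "g1 = g + Hm *v hh + R1" by (simp add: g1 R1_def g_def z_def p_def)
  have gte: "gt = g + \<rho>t *\<^sub>R (Hm *v g) + R2"
    by (simp add: gt_def R2_def g_def z_def p_def zt_def matrix_vector_mult_scaleR)
  define e where "e = v k \<bullet> g"
  have A: "v k \<bullet> g1 = e - \<eta> * \<mu> * lam k * (v k \<bullet> gt) + v k \<bullet> R1"
    by (simp add: g1e inner_add_right specx hh_def e_def)
  have B: "v k \<bullet> gt = e + \<rho>t * lam k * e + v k \<bullet> R2"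
    by (simp add: gte inner_add_right specx e_def)
  have diff: "v k \<bullet> g1 - (1 - \<eta> * \<mu> * (lam k + \<rho>t * (lam k)\<^sup>2)) * (v k \<bullet> g)
      = - (\<eta> * \<mu> * lam k * (v k \<bullet> R2)) + v k \<bullet> R1"
    unfolding A B e_def[symmetric] by (simp add: algebra_simps power2_eq_square)
  have gtb: "(norm gt)\<^sup>2 \<le> 2" unfolding gt_def by (rule onehot_bound[OF oh])
  have "\<bar>v k \<bullet> R1\<bar> \<le> K * (norm hh)\<^sup>2" using inner_le_norm[OF vv, of R1] R1b by linarith
  also have "K * (norm hh)\<^sup>2 = K * \<eta>\<^sup>2 * \<mu>\<^sup>2 * (norm gt)\<^sup>2"
    by (simp add: hh_def power_mult_distrib)
  also have "\<dots> \<le> K * \<eta>\<^sup>2 * \<mu>\<^sup>2 * 2" using gtb K0 by (intro mult_left_mono) auto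
  finally have b1: "\<bar>v k \<bullet> R1\<bar> \<le> 2 * K * \<mu>\<^sup>2 * \<eta>\<^sup>2" by (simp add: algebra_simps)
  have rho2: "\<rho>\<^sup>2 \<le> \<kappa>\<^sup>2 * \<bar>\<eta>\<bar>"
  proof -
    have "\<bar>\<rho>\<bar>\<^sup>2 \<le> (\<kappa> * sqrt \<bar>\<eta>\<bar>)\<^sup>2" by (rule power_mono[OF rho]) simp
    then show ?thesis by (simp add: power_mult_distrib)
  qed
  have ng: "(norm (\<rho>t *\<^sub>R g))\<^sup>2 \<le> \<rho>\<^sup>2 * \<mu>"
  proof (cases "g = 0")
    case True then show ?thesis using mu by simp
  next
    case False
    then have "(norm (\<rho>t *\<^sub>R g))\<^sup>2 = \<rho>\<^sup>2 * \<mu>"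
      using mu by (simp add: rt power_mult_distrib power_divide)
    then show ?thesis by simp
  qed
  have "\<bar>v k \<bullet> R2\<bar> \<le> K * (norm (\<rho>t *\<^sub>R g))\<^sup>2" using inner_le_norm[OF vv, of R2] R2b by linarith
  also have "\<dots> \<le> K * (\<rho>\<^sup>2 * \<mu>)" using ng K0 by (intro mult_left_mono) auto
  also have "\<dots> \<le> K * (\<kappa>\<^sup>2 * \<bar>\<eta>\<bar> * \<mu>)" using rho2 K0 mu by (intro mult_left_mono) auto
  finally have b2: "\<bar>v k \<bullet> R2\<bar> \<le> K * \<kappa>\<^sup>2 * \<bar>\<eta>\<bar> * \<mu>" by (simp add: algebra_simps)
  have "\<bar>\<eta> * \<mu> * lam k * (v k \<bullet> R2)\<bar> = \<bar>\<eta>\<bar> * \<mu> * lam k * \<bar>v k \<bullet> R2\<bar>"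
    using mu lk by (simp add: abs_mult)
  also have "\<dots> \<le> \<bar>\<eta>\<bar> * \<mu> * 1 * (K * \<kappa>\<^sup>2 * \<bar>\<eta>\<bar> * \<mu>)"
    using mu lk lk1 b2 by (intro mult_mono mult_nonneg_nonneg) auto
  also have "\<dots> = K * \<kappa>\<^sup>2 * \<mu>\<^sup>2 * \<eta>\<^sup>2" by (simp add: power2_eq_square algebra_simps)
  finally have b3: "\<bar>\<eta> * \<mu> * lam k * (v k \<bullet> R2)\<bar> \<le> K * \<kappa>\<^sup>2 * \<mu>\<^sup>2 * \<eta>\<^sup>2" .
  have "\<bar>- (\<eta> * \<mu> * lam k * (v k \<bullet> R2)) + v k \<bullet> R1\<bar> \<le> K * \<kappa>\<^sup>2 * \<mu>\<^sup>2 * \<eta>\<^sup>2 + 2 * K * \<mu>\<^sup>2 * \<eta>\<^sup>2"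
    using b1 b3 by linarith
  also have "\<dots> = (6 * real CARD('v) * \<kappa>\<^sup>2 * \<mu>\<^sup>2 + 2 * (6 * real CARD('v)) * \<mu>\<^sup>2) * \<eta>\<^sup>2"
    by (simp add: K_def algebra_simps)
  finally show ?thesis unfolding diff .
qed

theorem corollary1:
  fixes \<mu> \<kappa> :: real
  assumes "\<mu> > 0" and "\<kappa> \<ge> 0"
  shows "\<exists>C>0. \<forall>(d::nat) (phi::nat \<Rightarrow> real) (y::real^'v) (\<eta>::real) (\<rho>::real)
            (W::nat \<Rightarrow> real^'v) (lam::nat \<Rightarrow> real) (v::nat \<Rightarrow> real^'v).
      sqnorm_d d phi = \<mu> \<longrightarrow> one_hot y \<longrightarrow>
      0 < \<bar>\<eta>\<bar> \<longrightarrow> \<bar>\<eta>\<bar> \<le> 1 \<longrightarrow> \<bar>\<rho>\<bar> \<le> \<kappa> * sqrt \<bar>\<eta>\<bar> \<longrightarrow>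
      hess_z (softmax (matvec d W phi)) = (\<Sum>k\<in>{1..CARD('v)-1}. lam k *\<^sub>R outer (v k) (v k)) \<longrightarrow>
      (\<forall>k\<in>{1..CARD('v)-1}. lam k > 0) \<longrightarrow>
      (\<forall>k\<in>{1..CARD('v)-1}. \<forall>l\<in>{1..CARD('v)-1}. v k \<bullet> v l = (if k = l then 1 else 0)) \<longrightarrow>
      (let g = softmax (matvec d W phi) - y;
           g1 = softmax (matvec d (sam_step d phi y \<eta> \<rho> W) phi) - y;
           \<rho>t = (if g = 0 then 0 else \<rho> * sqrt \<mu> / norm g)
       in \<forall>k\<in>{1..CARD('v)-1}.
            \<bar>v k \<bullet> g1 - (1 - \<eta> * \<mu> * (lam k + \<rho>t * (lam k)\<^sup>2)) * (v k \<bullet> g)\<bar> \<le> C * \<eta>\<^sup>2)"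
  proof -
  define C where "C = 6 * real CARD('v) * \<kappa>\<^sup>2 * \<mu>\<^sup>2 + 2 * (6 * real CARD('v)) * \<mu>\<^sup>2 + 1"
  have C0: "C > 0" unfolding C_def by (intro add_nonneg_pos) auto
  show ?thesis
  proof (rule exI[of _ C], intro conjI C0 allI impI)
    fix d :: nat and phi :: "nat \<Rightarrow> real" and y :: "real^'v" and \<eta> \<rho> :: real
      and W :: "nat \<Rightarrow> real^'v" and lam :: "nat \<Rightarrow> real" and v :: "nat \<Rightarrow> real^'v"
    assume h: "sqnorm_d d phi = \<mu>" "one_hot y" "0 < \<bar>\<eta>\<bar>" "\<bar>\<eta>\<bar> \<le> 1" "\<bar>\<rho>\<bar> \<le> \<kappa> * sqrt \<bar>\<eta>\<bar>"
      "hess_z (softmax (matvec d W phi)) = (\<Sum>k\<in>{1..CARD('v)-1}. lam k *\<^sub>R outer (v k) (v k))"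
      "\<forall>k\<in>{1..CARD('v)-1}. lam k > 0"
      "\<forall>k\<in>{1..CARD('v)-1}. \<forall>l\<in>{1..CARD('v)-1}. v k \<bullet> v l = (if k = l then 1 else 0)"
    show "let g = softmax (matvec d W phi) - y;
           g1 = softmax (matvec d (sam_step d phi y \<eta> \<rho> W) phi) - y;
           \<rho>t = (if g = 0 then 0 else \<rho> * sqrt \<mu> / norm g)
       in \<forall>k\<in>{1..CARD('v)-1}.
            \<bar>v k \<bullet> g1 - (1 - \<eta> * \<mu> * (lam k + \<rho>t * (lam k)\<^sup>2)) * (v k \<bullet> g)\<bar> \<le> C * \<eta>\<^sup>2"
      unfolding Let_def
    proof
      fix k assume k: "k \<in> {1..CARD('v)-1}"
      have "\<bar>v k \<bullet> (softmax (matvec d (sam_step d phi y \<eta> \<rho> W) phi) - y) - (1 - \<eta> * \<mu> * (lam k + (if softmax (matvec d W phi) - y = 0 then 0 else \<rho> * sqrt \<mu> / norm (softmax (matvec d W phi) - y)) * (lam k)\<^sup>2)) * (v k \<bullet> (softmax (matvec d W phi) - y))\<bar>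
        \<le> (6 * real CARD('v) * \<kappa>\<^sup>2 * \<mu>\<^sup>2 + 2 * (6 * real CARD('v)) * \<mu>\<^sup>2) * \<eta>\<^sup>2"
        by (rule main_step[OF h(1) assms(1) assms(2) h(2) h(4) h(5) h(6) _ h(8) k]) (use h(7) k in auto)
      also have "\<dots> \<le> C * \<eta>\<^sup>2" unfolding C_def by (intro mult_right_mono) auto
      finally show "\<bar>v k \<bullet> (softmax (matvec d (sam_step d phi y \<eta> \<rho> W) phi) - y) - (1 - \<eta> * \<mu> * (lam k + (if softmax (matvec d W phi) - y = 0 then 0 else \<rho> * sqrt \<mu> / norm (softmax (matvec d W phi) - y)) * (lam k)\<^sup>2)) * (v k \<bullet> (softmax (matvec d W phi) - y))\<bar> \<le> C * \<eta>\<^sup>2" .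
    qed
  qed
qed

end
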